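(* Let $k\in\mathbb C$ be non-algebraic and $n,m\in\mathbb Z_{>0}$. Let $E$ be an $\mathcal E$-equivalence class (with respect to $p_0=n+k^{-1}m$), with minimal element $(\lambda_m,\mu_m)$ and maximal element $(\lambda_M,\mu_M)$, and let $\nu_1,\dots,\nu_r$ be the connected components of $\lambda_M\setminus\lambda_m$. For a set of boxes $\nu$ put $g_s(\nu)=\sum_{x\in\nu}c(x,0)^{s-1}$. Then the determinant $\det\big(g_s(\nu_t)\big)_{s,t=1}^{r}$ is nonzero.
   Context: Partitions are Young diagrams (finite sets of boxes $(i,j)\in\mathbb Z^2_{>0}$, $i$ = row, $j$ = column, closed under moving up or left); a bipartition is a pair of partitions; inclusion componentwise; connected components are with respect to boxes sharing an edge. For a box $x=(i,j)$, $c(x,a)=(j-1)+k(i-1)+a$; for $\alpha=(\lambda,\mu)$, $b_r(\alpha,k,p_0)=\sum_{x\in\lambda}c(x,0)^{r-1}+(-1)^r\sum_{y\in\mu}c(y,1+k-kp_0)^{r-1}$; bipartitions are $\mathcal E$-equivalent if all $b_r(\cdot,k,n+k^{-1}m)$, $r\ge1$, coincide. Each $\mathcal E$-class has a unique minimal and maximal element with respect to inclusion. *)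

theory Defs
  imports "HOL-Computational_Algebra.Polynomial" "Jordan_Normal_Form.Determinant"
begin

type_synonym box = "nat \<times> nat"
type_synonym bipartition = "box set \<times> box set"

text \<open>Young diagrams: finite sets of boxes (i,j) with i,j >= 1 (i = row, j = column),
closed under moving up or left.\<close>
definition is_partition :: "box set \<Rightarrow> bool" where
  "is_partition la \<longleftrightarrow> finite la \<and> (\<forall>(i,j)\<in>la. i \<ge> 1 \<and> j \<ge> 1) \<and>
     (\<forall>(i,j)\<in>la. (i > 1 \<longrightarrow> (i - 1, j) \<in> la) \<and> (j > 1 \<longrightarrow> (i, j - 1) \<in> la))"

definition is_bipartition :: "bipartition \<Rightarrow> bool" where
  "is_bipartition al \<longleftrightarrow> is_partition (fst al) \<and> is_partition (snd al)"

definition bip_le :: "bipartition \<Rightarrow> bipartition \<Rightarrow> bool" where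
  "bip_le al be \<longleftrightarrow> fst al \<subseteq> fst be \<and> snd al \<subseteq> snd be"

definition cont :: "complex \<Rightarrow> box \<Rightarrow> complex \<Rightarrow> complex" where
  "cont k x a = of_nat (snd x - 1) + k * of_nat (fst x - 1) + a"

definition b_fun :: "nat \<Rightarrow> bipartition \<Rightarrow> complex \<Rightarrow> complex \<Rightarrow> complex" where
  "b_fun r al k p0 =
     (\<Sum>x\<in>fst al. cont k x 0 ^ (r - 1))
     + (-1) ^ r * (\<Sum>y\<in>snd al. cont k y (1 + k - k * p0) ^ (r - 1))"

definition E_equiv :: "complex \<Rightarrow> nat \<Rightarrow> nat \<Rightarrow> bipartition \<Rightarrow> bipartition \<Rightarrow> bool" where
  "E_equiv k n m al be \<longleftrightarrow>
     (\<forall>r\<ge>1. b_fun r al k (of_nat n + inverse k * of_nat m) = b_fun r be k (of_nat n + inverse k * of_nat m))"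

definition E_class :: "complex \<Rightarrow> nat \<Rightarrow> nat \<Rightarrow> bipartition \<Rightarrow> bipartition set" where
  "E_class k n m al = {be. is_bipartition be \<and> E_equiv k n m al be}"

definition adjacent :: "box \<Rightarrow> box \<Rightarrow> bool" where
  "adjacent x y \<longleftrightarrow>
     (fst x = fst y \<and> (snd x = snd y + 1 \<or> snd y = snd x + 1)) \<or>
     (snd x = snd y \<and> (fst x = fst y + 1 \<or> fst y = fst x + 1))"

definition components :: "box set \<Rightarrow> box set set" where
  "components S = (\<lambda>x. {y \<in> S. (x, y) \<in> {(u, v). u \<in> S \<and> v \<in> S \<and> adjacent u v}\<^sup>*}) ` S"

definition g_fun :: "complex \<Rightarrow> nat \<Rightarrow> box set \<Rightarrow> complex" where
  "g_fun k s nu = (\<Sum>x\<in>nu. cont k x 0 ^ (s - 1))"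

end

theory Submission
  imports Defs
begin

lemma det_col_sum:
  fixes A :: "'a::comm_ring_1 mat"
  assumes A: "A \<in> carrier_mat n n" and j: "j < n" and Y: "finite Y"
    and B: "\<And>y. B y \<in> carrier_mat n n"
    and off: "\<And>y i l. y \<in> Y \<Longrightarrow> i < n \<Longrightarrow> l < n \<Longrightarrow> l \<noteq> j \<Longrightarrow> B y $$ (i,l) = A $$ (i,l)"
    and col: "\<And>i. i < n \<Longrightarrow> A $$ (i,j) = (\<Sum>y\<in>Y. f y * B y $$ (i,j))"
  shows "det A = (\<Sum>y\<in>Y. f y * det (B y))"
proof -
  have jn: "j \<in> {..<n}" using j by auto
  have "det A = (\<Sum> p | p permutes {0 ..< n}. signof p * (\<Prod>l<n. A $$ (p l, l)))"
    by (rule det_col[OF A])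
  also have "\<dots> = (\<Sum> p | p permutes {0 ..< n}. (\<Sum>y\<in>Y. f y * (signof p * (\<Prod>l<n. B y $$ (p l, l)))))"
  proof (rule sum.cong[OF refl])
    fix p assume "p \<in> {p. p permutes {0..<n}}"
    hence p: "p permutes {0..<n}" by auto
    have pl: "\<And>l. l < n \<Longrightarrow> p l < n" using permutes_in_image[OF p] by auto
    have "(\<Prod>l<n. A $$ (p l, l)) = A $$ (p j, j) * (\<Prod>l\<in>{..<n}-{j}. A $$ (p l, l))"
      using prod.remove[OF _ jn] by auto
    also have "\<dots> = (\<Sum>y\<in>Y. f y * B y $$ (p j, j)) * (\<Prod>l\<in>{..<n}-{j}. A $$ (p l, l))"
      using col pl j by auto
    also have "\<dots> = (\<Sum>y\<in>Y. f y * (B y $$ (p j, j) * (\<Prod>l\<in>{..<n}-{j}. B y $$ (p l, l))))"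
      unfolding sum_distrib_right
    proof (rule sum.cong[OF refl])
      fix y assume y: "y \<in> Y"
      have "(\<Prod>l\<in>{..<n}-{j}. A $$ (p l, l)) = (\<Prod>l\<in>{..<n}-{j}. B y $$ (p l, l))"
        by (rule prod.cong[OF refl], auto simp: off[OF y] pl)
      then show "f y * B y $$ (p j, j) * (\<Prod>l\<in>{..<n}-{j}. A $$ (p l, l)) =
         f y * (B y $$ (p j, j) * (\<Prod>l\<in>{..<n}-{j}. B y $$ (p l, l)))" by (simp add: mult.assoc)
    qed
    also have "\<dots> = (\<Sum>y\<in>Y. f y * (\<Prod>l<n. B y $$ (p l, l)))"
    proof -
      have rm: "\<And>g. prod g {..<n} = g j * prod g ({..<n}-{j})" using prod.remove[OF _ jn] by auto
      show ?thesis by (simp only: rm)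
    qed
    finally show "signof p * (\<Prod>l<n. A $$ (p l, l)) = (\<Sum>y\<in>Y. f y * (signof p * (\<Prod>l<n. B y $$ (p l, l))))"
      by (simp add: sum_distrib_left algebra_simps)
  qed
  also have "\<dots> = (\<Sum>y\<in>Y. f y * (\<Sum> p | p permutes {0 ..< n}. signof p * (\<Prod>l<n. B y $$ (p l, l))))"
    by (subst sum.swap, simp add: sum_distrib_left)
  also have "\<dots> = (\<Sum>y\<in>Y. f y * det (B y))"
    using det_col[OF B] by simp
  finally show ?thesis .
qed

definition skip :: "nat \<Rightarrow> nat \<Rightarrow> nat" where
  "skip j t = (if t < j then t else Suc t)"

lemma det_point_col:
  fixes a :: "'a::comm_ring_1" and B :: "'a mat"
  assumes B: "B \<in> carrier_mat (Suc n) (Suc n)" and j: "j < Suc n"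
    and colj: "\<And>i. i < Suc n \<Longrightarrow> B $$ (i,j) = a ^ i"
  shows "det B = (-1)^j * det (mat n n (\<lambda>(i,t). B $$ (Suc i, skip j t) - a * B $$ (i, skip j t)))"
proof -
  define L where "L = mat (Suc n) (Suc n) (\<lambda>(i,k). if i = k then 1 else if i = Suc k then -a else (0::'a))"
  have L: "L \<in> carrier_mat (Suc n) (Suc n)" unfolding L_def by auto
  have detL: "det L = 1"
  proof -
    have "det L = prod_list (diag_mat L)"
      by (rule det_lower_triangular[OF _ L], auto simp: L_def)
    also have "\<dots> = 1" unfolding prod_list_diag_prod using L
      by (auto simp: L_def intro!: prod.neutral)
    finally show ?thesis .
  qed
  define C where "C = L * B"
  have C: "C \<in> carrier_mat (Suc n) (Suc n)" unfolding C_def using L B by auto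
  have detC: "det C = det B" unfolding C_def using det_mult[OF L B] detL by simp
  have Cent: "C $$ (i,t) = B $$ (i,t) - (if i = 0 then 0 else a * B $$ (i - 1, t))"
    if i: "i < Suc n" and t: "t < Suc n" for i t
  proof -
    have "C $$ (i,t) = (\<Sum>k\<in>{0..<Suc n}. L $$ (i,k) * B $$ (k,t))"
      unfolding C_def using L B i t by (simp add: scalar_prod_def)
    also have "\<dots> = (\<Sum>k\<in>{0..<Suc n}. (if k = i then B $$ (k,t) else 0) + (if Suc k = i then - a * B $$ (k,t) else 0))"
      by (rule sum.cong[OF refl], auto simp: L_def i)
    also have "\<dots> = B $$ (i,t) - (if i = 0 then 0 else a * B $$ (i - 1, t))"
      unfolding sum.distrib using i by (cases i, auto)
    finally show ?thesis .
  qed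
  have "det C = (\<Sum>i<Suc n. C $$ (i,j) * cofactor C i j)"
    by (rule laplace_expansion_column[OF C j])
  also have "\<dots> = C $$ (0,j) * cofactor C 0 j + (\<Sum>i<n. C $$ (Suc i,j) * cofactor C (Suc i) j)"
    by (rule sum.lessThan_Suc_shift)
  also have "\<dots> = cofactor C 0 j"
    using Cent j colj by auto
  also have "\<dots> = (-1)^j * det (mat_delete C 0 j)" unfolding cofactor_def by simp
  also have "mat_delete C 0 j = mat n n (\<lambda>(i,t). B $$ (Suc i, skip j t) - a * B $$ (i, skip j t))"
    using C by (intro eq_matI, auto simp: mat_delete_def Cent skip_def)
  finally show ?thesis using detC by simp
qed

definition mm :: "nat \<Rightarrow> (nat \<Rightarrow> 'a set) \<Rightarrow> ('a \<Rightarrow> real) \<Rightarrow> ('a \<Rightarrow> real) \<Rightarrow> real mat" where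
  "mm r G w c = mat r r (\<lambda>(s,t). \<Sum>x\<in>G t. w x * c x ^ s)"

definition below :: "(nat \<Rightarrow> 'a set) \<Rightarrow> ('a \<Rightarrow> real) \<Rightarrow> nat \<Rightarrow> nat \<Rightarrow> bool" where
  "below G c t t' = (\<forall>x\<in>G t. \<forall>x'\<in>G t'. c x < c x')"

definition good :: "nat \<Rightarrow> (nat \<Rightarrow> 'a set) \<Rightarrow> ('a \<Rightarrow> real) \<Rightarrow> ('a \<Rightarrow> real) \<Rightarrow> bool" where
  "good r G w c = ((\<forall>t<r. finite (G t) \<and> G t \<noteq> {} \<and> (\<forall>x\<in>G t. w x > 0)) \<and>
     (\<forall>t<r. \<forall>t'<r. t \<noteq> t' \<longrightarrow> below G c t t' \<or> below G c t' t))"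

lemma aux_sum: "(\<Sum>x\<in>S. w x * (c x * c x ^ i)) - a * (\<Sum>x\<in>S. w x * c x ^ i) = (\<Sum>x\<in>S. w x * (c x - a) * c x ^ i)"
  for w c :: "'a \<Rightarrow> real"
proof -
  have "(\<Sum>x\<in>S. w x * (c x - a) * c x ^ i) = (\<Sum>x\<in>S. w x * (c x * c x ^ i) - a * (w x * c x ^ i))"
    by (rule sum.cong, auto simp: algebra_simps)
  also have "\<dots> = (\<Sum>x\<in>S. w x * c x ^ Suc i) - a * (\<Sum>x\<in>S. w x * c x ^ i)"
    by (simp add: sum_subtractf sum_distrib_left)
  finally show ?thesis by simp
qed

lemma mm_expand:
  assumes g: "good (Suc n) G w c" and j: "j < Suc n"
  shows "det (mm (Suc n) G w c) = (-1)^j * (\<Sum>y\<in>G j. w y * det (mm n (\<lambda>t. G (skip j t)) (\<lambda>x. w x * (c x - c y)) c))"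
proof -
  define B where "B = (\<lambda>y. mat (Suc n) (Suc n) (\<lambda>(s,t). if t = j then c y ^ s else \<Sum>x\<in>G t. w x * c x ^ s))"
  have fin: "finite (G j)" using g j unfolding good_def by auto
  have "det (mm (Suc n) G w c) = (\<Sum>y\<in>G j. w y * det (B y))"
    by (rule det_col_sum[OF _ j fin], insert j, auto simp: mm_def B_def sum_distrib_left intro!: sum.cong)
  also have "\<dots> = (\<Sum>y\<in>G j. w y * ((-1)^j * det (mm n (\<lambda>t. G (skip j t)) (\<lambda>x. w x * (c x - c y)) c)))"
  proof (rule sum.cong[OF refl])
    fix y assume y: "y \<in> G j"
    have "det (B y) = (-1)^j * det (mat n n (\<lambda>(i,t). B y $$ (Suc i, skip j t) - c y * B y $$ (i, skip j t)))"
      by (rule det_point_col[OF _ j], insert j, auto simp: B_def)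
    also have "mat n n (\<lambda>(i,t). B y $$ (Suc i, skip j t) - c y * B y $$ (i, skip j t)) =
       mm n (\<lambda>t. G (skip j t)) (\<lambda>x. w x * (c x - c y)) c"
      by (intro eq_matI, auto simp: mm_def B_def skip_def aux_sum)
    finally show "w y * det (B y) = w y * ((-1)^j * det (mm n (\<lambda>t. G (skip j t)) (\<lambda>x. w x * (c x - c y)) c))"
      by simp
  qed
  finally show ?thesis by (simp add: sum_distrib_left algebra_simps)
qed

lemma good_min:
  assumes g: "good (Suc n) G w c"
  obtains j where "j < Suc n" "\<And>t. t < Suc n \<Longrightarrow> t \<noteq> j \<Longrightarrow> below G c j t"
proof -
  define m where "m = (\<lambda>t. Min (c ` G t))"
  have fin: "\<And>t. t < Suc n \<Longrightarrow> finite (G t) \<and> G t \<noteq> {}" using g unfolding good_def by auto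
  define M where "M = Min (m ` {..n})"
  have "M \<in> m ` {..n}" unfolding M_def by (rule Min_in, auto)
  then obtain j where j: "j \<le> n" "m j = M" by auto
  have jle: "\<And>t. t \<le> n \<Longrightarrow> m j \<le> m t" unfolding j M_def by (rule Min_le, auto)
  have mem: "\<And>t. t < Suc n \<Longrightarrow> \<exists>x\<in>G t. c x = m t"
  proof -
    fix t assume t: "t < Suc n"
    have "m t \<in> c ` G t" unfolding m_def using fin[OF t] by (intro Min_in, auto)
    then show "\<exists>x\<in>G t. c x = m t" by auto
  qed
  show ?thesis
  proof (rule that[of j])
    show "j < Suc n" using j by auto
    fix t assume t: "t < Suc n" "t \<noteq> j"
    have "below G c j t \<or> below G c t j" using g t j unfolding good_def by auto
    moreover have "\<not> below G c t j"
    proof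
      assume b: "below G c t j"
      obtain x where x: "x \<in> G t" "c x = m t" using mem[OF t(1)] by auto
      obtain y where y: "y \<in> G j" "c y = m j" using mem[of j] j by auto
      have "c x < c y" using b x(1) y(1) unfolding below_def by blast
      with jle[of t] t x y show False by auto
    qed
    ultimately show "below G c j t" by auto
  qed
qed

lemma skip_lt: "t < n \<Longrightarrow> skip j t < Suc n" by (auto simp: skip_def)
lemma skip_ne: "skip j t \<noteq> j" by (auto simp: skip_def)
lemma skip_inj: "(skip j t = skip j t') = (t = t')" by (auto simp: skip_def)

lemma good_skip:
  assumes g: "good (Suc n) G w c" and j: "j < Suc n"
    and bl: "\<And>t. t < Suc n \<Longrightarrow> t \<noteq> j \<Longrightarrow> below G c j t"
    and y: "y \<in> G j"
  shows "good n (\<lambda>t. G (skip j t)) (\<lambda>x. w x * (c x - c y)) c"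
  unfolding good_def
proof (intro conjI allI impI)
  fix t assume t: "t < n"
  have st: "skip j t < Suc n" "skip j t \<noteq> j" using t skip_lt skip_ne by auto
  show "finite (G (skip j t))" "G (skip j t) \<noteq> {}" using g st unfolding good_def by auto
  show "\<forall>x\<in>G (skip j t). 0 < w x * (c x - c y)"
  proof
    fix x assume x: "x \<in> G (skip j t)"
    have "w x > 0" using g st x unfolding good_def by auto
    moreover have "c y < c x" using bl[OF st] x y unfolding below_def by auto
    ultimately show "0 < w x * (c x - c y)" by auto
  qed
next
  fix t t' assume "t < n" "t' < n" "t \<noteq> t'"
  then show "below (\<lambda>t. G (skip j t)) c t t' \<or> below (\<lambda>t. G (skip j t)) c t' t"
    using g skip_lt skip_inj unfolding good_def below_def by metis
qed

lemma core:
  assumes "good r G w c" "good r G' w' c'"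
    and "\<And>t t'. t < r \<Longrightarrow> t' < r \<Longrightarrow> below G c t t' = below G' c' t t'"
  shows "det (mm r G w c) * det (mm r G' w' c') > 0"
  using assms
proof (induction r arbitrary: G w c G' w' c')
  case 0
  then show ?case by (simp add: mm_def)
next
  case (Suc n)
  obtain j where j: "j < Suc n" and bl: "\<And>t. t < Suc n \<Longrightarrow> t \<noteq> j \<Longrightarrow> below G c j t"
    using good_min[OF Suc.prems(1)] by blast
  have bl': "\<And>t. t < Suc n \<Longrightarrow> t \<noteq> j \<Longrightarrow> below G' c' j t" using bl Suc.prems(3) j by auto
  define d where "d = (\<lambda>y. det (mm n (\<lambda>t. G (skip j t)) (\<lambda>x. w x * (c x - c y)) c))"
  define d' where "d' = (\<lambda>y. det (mm n (\<lambda>t. G' (skip j t)) (\<lambda>x. w' x * (c' x - c' y)) c'))"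
  have e1: "det (mm (Suc n) G w c) = (-1)^j * (\<Sum>y\<in>G j. w y * d y)"
    unfolding d_def by (rule mm_expand[OF Suc.prems(1) j])
  have e2: "det (mm (Suc n) G' w' c') = (-1)^j * (\<Sum>y\<in>G' j. w' y * d' y)"
    unfolding d'_def by (rule mm_expand[OF Suc.prems(2) j])
  have fin: "finite (G j)" "G j \<noteq> {}" "finite (G' j)" "G' j \<noteq> {}"
    using Suc.prems(1,2) j unfolding good_def by auto
  have pos: "0 < (w y * d y) * (w' y' * d' y')" if y: "y \<in> G j" and y': "y' \<in> G' j" for y y'
  proof -
    have "0 < d y * d' y'" unfolding d_def d'_def
    proof (rule Suc.IH)
      show "good n (\<lambda>t. G (skip j t)) (\<lambda>x. w x * (c x - c y)) c"
        by (rule good_skip[OF Suc.prems(1) j bl y])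
      show "good n (\<lambda>t. G' (skip j t)) (\<lambda>x. w' x * (c' x - c' y')) c'"
        by (rule good_skip[OF Suc.prems(2) j bl' y'])
      fix t t' assume "t < n" "t' < n"
      then show "below (\<lambda>t. G (skip j t)) c t t' = below (\<lambda>t. G' (skip j t)) c' t t'"
        using Suc.prems(3)[of "skip j t" "skip j t'"] skip_lt unfolding below_def by auto
    qed
    moreover have "w y > 0" "w' y' > 0" using Suc.prems(1,2) j y y' unfolding good_def by auto
    ultimately have "0 < (d y * d' y') * (w y * w' y')" by (simp add: mult_pos_pos)
    then show ?thesis by (simp add: algebra_simps)
  qed
  have "det (mm (Suc n) G w c) * det (mm (Suc n) G' w' c') =
      ((-1)^j * (-1)^j) * ((\<Sum>y\<in>G j. w y * d y) * (\<Sum>y\<in>G' j. w' y * d' y))"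
    unfolding e1 e2 by (simp add: algebra_simps)
  also have "(-1)^j * (-1)^j = (1::real)" by (simp add: power_mult_distrib[symmetric])
  also have "(\<Sum>y\<in>G j. w y * d y) * (\<Sum>y\<in>G' j. w' y * d' y) =
     (\<Sum>y\<in>G j. \<Sum>y'\<in>G' j. (w y * d y) * (w' y' * d' y'))"
    by (rule sum_product)
  finally have eq: "det (mm (Suc n) G w c) * det (mm (Suc n) G' w' c') =
     (\<Sum>y\<in>G j. \<Sum>y'\<in>G' j. (w y * d y) * (w' y' * d' y'))" by simp
  have "(\<Sum>y\<in>G j. \<Sum>y'\<in>G' j. (w y * d y) * (w' y' * d' y')) > 0"
    using fin pos by (intro sum_pos, auto)
  then show ?case using eq by simp
qed

definition zp :: "complex poly \<Rightarrow> bool" where "zp p = (\<forall>i. coeff p i \<in> \<int>)"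

lemma zp_add: "zp p \<Longrightarrow> zp q \<Longrightarrow> zp (p + q)" by (auto simp: zp_def)
lemma zp_mult: "zp p \<Longrightarrow> zp q \<Longrightarrow> zp (p * q)"
  unfolding zp_def coeff_mult by (auto intro!: Ints_sum Ints_mult)
lemma zp_const: "a \<in> \<int> \<Longrightarrow> zp [:a:]" by (auto simp: zp_def coeff_pCons split: nat.splits)
lemma zp_lin: "a \<in> \<int> \<Longrightarrow> b \<in> \<int> \<Longrightarrow> zp [:a, b:]" by (auto simp: zp_def coeff_pCons split: nat.splits)
lemma zp_sum: "(\<And>x. x \<in> A \<Longrightarrow> zp (f x)) \<Longrightarrow> zp (sum f A)"
  unfolding zp_def by (auto simp: coeff_sum intro!: Ints_sum)
lemma zp_prod: "(\<And>x. x \<in> A \<Longrightarrow> zp (f x)) \<Longrightarrow> zp (prod f A)"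
proof (induction A rule: infinite_finite_induct)
  case (infinite A) then show ?case by (simp add: zp_def)
next
  case empty then show ?case by (simp add: zp_def)
next
  case (insert x F) then show ?case by (auto intro: zp_mult)
qed
lemma zp_power: "zp p \<Longrightarrow> zp (p ^ n)"
proof (induction n)
  case 0 then show ?case by (simp add: zp_def)
next
  case (Suc n) then show ?case by (simp add: zp_mult)
qed
lemma zp_signof: "zp (signof p)"
  by (auto simp: sign_def zp_def intro!: Ints_minus)

lemma zp_det: assumes "\<And>i j. i < n \<Longrightarrow> j < n \<Longrightarrow> zp (A $$ (i,j))" "A \<in> carrier_mat n n"
  shows "zp (det A)"
proof -
  have "det A = (\<Sum> p \<in> {p. p permutes {0 ..< n}}. signof p * (\<Prod> i = 0 ..< n. A $$ (i, p i)))"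
    by (rule det_def'[OF assms(2)])
  also have "zp \<dots>"
  proof (rule zp_sum)
    fix p assume "p \<in> {p. p permutes {0 ..< n}}"
    then have p: "p permutes {0..<n}" by auto
    show "zp (signof p * (\<Prod> i = 0 ..< n. A $$ (i, p i)))"
      using assms(1) permutes_in_image[OF p] by (auto intro!: zp_mult zp_signof zp_prod)
  qed
  finally show ?thesis .
qed

lemma poly_eval_hom: "comm_ring_hom (\<lambda>p::complex poly. poly p z)"
  by (unfold_locales, auto)

lemma transc_det:
  fixes k z0 :: complex and a b :: "'x \<Rightarrow> nat" and G :: "nat \<Rightarrow> 'x set"
  assumes k: "\<not> algebraic k"
    and z0: "det (mat r r (\<lambda>(s,t). \<Sum>x\<in>G t. (of_nat (a x) + z0 * of_nat (b x)) ^ s)) \<noteq> 0"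
  shows "det (mat r r (\<lambda>(s,t). \<Sum>x\<in>G t. (of_nat (a x) + k * of_nat (b x)) ^ s)) \<noteq> 0"
proof -
  define P where "P = mat r r (\<lambda>(s,t). \<Sum>x\<in>G t. [:of_nat (a x), of_nat (b x):] ^ s :: complex poly)"
  have ev: "det (mat r r (\<lambda>(s,t). \<Sum>x\<in>G t. (of_nat (a x) + z * of_nat (b x)) ^ s)) = poly (det P) z" for z
  proof -
    interpret h: comm_ring_hom "\<lambda>p::complex poly. poly p z" by (rule poly_eval_hom)
    have "map_mat (\<lambda>p. poly p z) P = mat r r (\<lambda>(s,t). \<Sum>x\<in>G t. (of_nat (a x) + z * of_nat (b x)) ^ s)"
      unfolding P_def by (intro eq_matI, auto simp: poly_sum poly_power algebra_simps)
    then show ?thesis using h.hom_det[of P] by simp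
  qed
  have zpD: "zp (det P)"
    by (rule zp_det[of r], auto simp: P_def intro!: zp_sum zp_power zp_lin)
  have D0: "det P \<noteq> 0" using z0 ev[of z0] by auto
  show ?thesis
  proof
    assume "det (mat r r (\<lambda>(s,t). \<Sum>x\<in>G t. (of_nat (a x) + k * of_nat (b x)) ^ s)) = 0"
    then have "poly (det P) k = 0" using ev[of k] by simp
    then have "algebraic k" using zpD D0 by (intro algebraicI[of "det P"], auto simp: zp_def)
    then show False using k by simp
  qed
qed

definition Rel :: "box set \<Rightarrow> (box \<times> box) set" where
  "Rel S = {(u, v). u \<in> S \<and> v \<in> S \<and> adjacent u v}"

lemma components_alt: "components S = (\<lambda>x. {y \<in> S. (x, y) \<in> (Rel S)\<^sup>*}) ` S"
  unfolding components_def Rel_def by simp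

lemma Rel_sym: "(u,v) \<in> (Rel S)\<^sup>* \<Longrightarrow> (v,u) \<in> (Rel S)\<^sup>*"
proof (induction rule: rtrancl_induct)
  case base then show ?case by simp
next
  case (step y z)
  have "(z,y) \<in> Rel S" using step(2) unfolding Rel_def adjacent_def by auto
  then show ?case using step(3) by (meson converse_rtrancl_into_rtrancl)
qed

lemma Rel_in: "(u,v) \<in> (Rel S)\<^sup>* \<Longrightarrow> u \<in> S \<Longrightarrow> v \<in> S"
  by (induction rule: rtrancl_induct, auto simp: Rel_def)

lemma Rel_interval:
  assumes "(u,v) \<in> (Rel S)\<^sup>*"
  shows "min (fst u) (fst v) \<le> i \<Longrightarrow> i \<le> max (fst u) (fst v) \<Longrightarrow> \<exists>z. (u,z) \<in> (Rel S)\<^sup>* \<and> fst z = i"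
  using assms
proof (induction arbitrary: i rule: rtrancl_induct)
  case base
  then have "i = fst u" by auto
  then show ?case by (intro exI[of _ u], auto)
next
  case (step y v)
  have adj: "fst v \<le> fst y + 1 \<and> fst y \<le> fst v + 1" using step(2) unfolding Rel_def adjacent_def by auto
  show ?case
  proof (cases "min (fst u) (fst y) \<le> i \<and> i \<le> max (fst u) (fst y)")
    case True then show ?thesis using step(3) by auto
  next
    case False
    then have "i = fst v" using step(4,5) adj by auto
    moreover have "(u,v) \<in> (Rel S)\<^sup>*" using step(1,2) by (rule rtrancl_into_rtrancl)
    ultimately show ?thesis by (intro exI[of _ v], auto)
  qed
qed

lemma part_l1: "is_partition P \<Longrightarrow> (i,j) \<in> P \<Longrightarrow> j > 1 \<Longrightarrow> (i, j - 1) \<in> P"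
  unfolding is_partition_def by fast

lemma part_ge1': "is_partition P \<Longrightarrow> (i,j) \<in> P \<Longrightarrow> i \<ge> 1 \<and> j \<ge> 1"
  unfolding is_partition_def by auto

lemma part_ge1: "is_partition P \<Longrightarrow> x \<in> P \<Longrightarrow> fst x \<ge> 1 \<and> snd x \<ge> 1"
  using part_ge1'[of P "fst x" "snd x"] by simp

lemma part_left:
  assumes P: "is_partition P" and ij: "(i,j) \<in> P" and l: "1 \<le> l" "l \<le> j"
  shows "(i,l) \<in> P"
proof -
  have main: "d < j \<Longrightarrow> (i, j - d) \<in> P" for d
  proof (induction d)
    case 0 then show ?case using ij by simp
  next
    case (Suc d)
    then have a: "(i, j - d) \<in> P" by simp
    have b: "j - d > 1" using Suc.prems by simp
    have "(i, j - d - 1) \<in> P" by (rule part_l1[OF P a b])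
    moreover have "j - d - 1 = j - Suc d" by simp
    ultimately show ?case by simp
  qed
  have "j - l < j" using l by simp
  then have "(i, j - (j - l)) \<in> P" by (rule main)
  moreover have "j - (j - l) = l" using l by simp
  ultimately show ?thesis by simp
qed

lemma same_row:
  assumes P: "is_partition P" and Q: "is_partition Q"
    and u: "(i,j) \<in> P - Q" and v: "(i,j') \<in> P - Q" and jj: "j \<le> j'"
  shows "((i,j),(i,j')) \<in> (Rel (P - Q))\<^sup>*"
proof -
  have j1: "j \<ge> 1" using part_ge1'[OF P, of i j] u by simp
  have vP: "(i,j') \<in> P" using v by simp
  have uQ: "(i,j) \<notin> Q" using u by simp
  have inS: "(i,l) \<in> P - Q" if l1: "j \<le> l" and l2: "l \<le> j'" for l
  proof -
    have l0: "1 \<le> l" using j1 l1 by simp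
    have "(i,l) \<in> P" by (rule part_left[OF P vP l0 l2])
    moreover have "(i,l) \<notin> Q"
    proof
      assume "(i,l) \<in> Q"
      then have "(i,j) \<in> Q" by (rule part_left[OF Q _ j1 l1])
      then show False using uQ by simp
    qed
    ultimately show ?thesis by simp
  qed
  have main: "j + d \<le> j' \<Longrightarrow> ((i,j),(i,j+d)) \<in> (Rel (P - Q))\<^sup>*" for d
  proof (induction d)
    case 0 then show ?case by simp
  next
    case (Suc d)
    then have a: "((i,j),(i,j+d)) \<in> (Rel (P - Q))\<^sup>*" by simp
    have s1: "(i,j+d) \<in> P - Q" using inS[of "j+d"] Suc.prems by simp
    have s2: "(i,j+Suc d) \<in> P - Q" using inS[of "j+Suc d"] Suc.prems by simp
    have "adjacent (i,j+d) (i,j+Suc d)" unfolding adjacent_def by simp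
    then have b: "((i,j+d),(i,j+Suc d)) \<in> Rel (P - Q)" using s1 s2 unfolding Rel_def by simp
    show ?case by (rule rtrancl_into_rtrancl[OF a b])
  qed
  have "j + (j' - j) \<le> j'" using jj by simp
  then have "((i,j),(i,j+(j'-j))) \<in> (Rel (P - Q))\<^sup>*" by (rule main)
  moreover have "j + (j' - j) = j'" using jj by simp
  ultimately show ?thesis by simp
qed

lemma same_row':
  assumes P: "is_partition P" and Q: "is_partition Q"
    and u: "u \<in> P - Q" and v: "v \<in> P - Q" and f: "fst u = fst v"
  shows "(u,v) \<in> (Rel (P - Q))\<^sup>*"
proof (cases "snd u \<le> snd v")
  case True then show ?thesis using same_row[OF P Q, of "fst u" "snd u" "snd v"] u v f by (cases u, cases v, auto)
next
  case False
  then have "(v,u) \<in> (Rel (P - Q))\<^sup>*" using same_row[OF P Q, of "fst u" "snd v" "snd u"] u v f by (cases u, cases v, auto)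
  then show ?thesis by (rule Rel_sym)
qed

lemma comp_sep:
  assumes P: "is_partition P" and Q: "is_partition Q"
    and A: "A \<in> components (P - Q)" and B: "B \<in> components (P - Q)" and AB: "A \<noteq> B"
  shows "(\<forall>a\<in>A. \<forall>b\<in>B. fst a < fst b) \<or> (\<forall>a\<in>A. \<forall>b\<in>B. fst b < fst a)"
proof -
  define S where "S = P - Q"
  define rel where "rel = (\<lambda>u v. (u,v) \<in> (Rel S)\<^sup>*)"
  have rsym: "rel u v \<Longrightarrow> rel v u" for u v unfolding rel_def by (rule Rel_sym)
  have rtr: "rel u v \<Longrightarrow> rel v w \<Longrightarrow> rel u w" for u v w unfolding rel_def by auto
  obtain x where x: "x \<in> S" "A = {y \<in> S. rel x y}" using A unfolding components_alt S_def rel_def by auto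
  obtain x' where x': "x' \<in> S" "B = {y \<in> S. rel x' y}" using B unfolding components_alt S_def rel_def by auto
  have noconn: "\<not> rel a b" if "a \<in> A" "b \<in> B" for a b
  proof
    assume ab: "rel a b"
    have "A = B"
    proof -
      have "rel x x'" using ab that x x' rsym rtr by blast
      then show ?thesis unfolding x x' using rsym rtr by blast
    qed
    then show False using AB by simp
  qed
  have nsr: "fst a \<noteq> fst b" if "a \<in> A" "b \<in> B" for a b
    using noconn[OF that] same_row'[OF P Q, of a b] that x x' unfolding rel_def S_def by auto
  have between: False if c1: "c1 \<in> C" and c2: "c2 \<in> C" and d: "d \<in> D"
    and bt: "min (fst c1) (fst c2) \<le> fst d" "fst d \<le> max (fst c1) (fst c2)"
    and CD: "(C = A \<and> D = B) \<or> (C = B \<and> D = A)" for C D c1 c2 d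
  proof -
    have "\<exists>y. y \<in> S \<and> C = {z \<in> S. rel y z}" using CD x x' by blast
    then obtain y where y: "y \<in> S" "C = {z \<in> S. rel y z}" by blast
    have "rel c1 c2" using c1 c2 y rsym rtr by blast
    then obtain z where z: "rel c1 z" "fst z = fst d" using Rel_interval[of c1 c2 S "fst d"] bt unfolding rel_def by auto
    have zS: "z \<in> S" using z(1) c1 y Rel_in unfolding rel_def by auto
    have "rel y c1" using c1 y by blast
    then have "rel y z" using z(1) by (rule rtr)
    then have zC: "z \<in> C" using y zS by blast
    show False
    proof (cases "C = A \<and> D = B")
      case True then show False using nsr[of z d] zC d z(2) by simp
    next
      case False then have "C = B" "D = A" using CD by auto
      then show False using nsr[of d z] zC d z(2) by simp
    qed
  qed
  show ?thesis
  proof (rule ccontr)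
    assume "\<not> ?thesis"
    then obtain a b a' b' where ab: "a \<in> A" "b \<in> B" "\<not> fst a < fst b"
      and ab': "a' \<in> A" "b' \<in> B" "\<not> fst b' < fst a'" by blast
    have h1: "fst b < fst a" using ab nsr[of a b] by linarith
    have h2: "fst a' < fst b'" using ab' nsr[of a' b'] by linarith
    show False
    proof (cases "fst b' \<le> fst a")
      case True
      have "min (fst a') (fst a) \<le> fst b'" "fst b' \<le> max (fst a') (fst a)" using True h2 by auto
      then show False using between[of a' A a b' B] ab(1) ab'(1,2) by blast
    next
      case False
      have "min (fst b) (fst b') \<le> fst a" "fst a \<le> max (fst b) (fst b')" using False h1 h2 by auto
      then show False using between[of b B b' a A] ab(1,2) ab'(2) by blast
    qed
  qed
qed

lemma cont_lt:
  fixes N :: nat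
  assumes "fst a \<ge> 1" "snd a < N" "fst a < fst b"
  shows "real (snd a - 1) + real N * real (fst a - 1) < real (snd b - 1) + real N * real (fst b - 1)"
proof -
  have "fst a - 1 + 1 \<le> fst b - 1" using assms by simp
  then have "real (fst a - 1) + 1 \<le> real (fst b - 1)" by linarith
  then have "real N * (real (fst a - 1) + 1) \<le> real N * real (fst b - 1)" by (simp add: mult_left_mono)
  moreover have "real (snd a - 1) < real N" using assms by simp
  ultimately show ?thesis by (simp add: algebra_simps)
qed

lemma of_real_hom': "comm_ring_hom (of_real :: real \<Rightarrow> complex)"
  by (unfold_locales, auto)

theorem mainTheorem12:
  fixes k :: complex and n m :: nat
    and E :: "bipartition set" and al alm alM :: bipartition
    and nus :: "box set list"
  assumes k_trans: "\<not> algebraic k"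
    and n_pos: "n > 0" and m_pos: "m > 0"
    and al_bip: "is_bipartition al"
    and E_def: "E = E_class k n m al"
    and min_mem: "alm \<in> E" and min_min: "\<forall>be\<in>E. bip_le be alm \<longrightarrow> be = alm"
    and max_mem: "alM \<in> E" and max_max: "\<forall>be\<in>E. bip_le alM be \<longrightarrow> be = alM"
    and nus_dist: "distinct nus"
    and nus_set: "set nus = components (fst alM - fst alm)"
  shows "det (mat (length nus) (length nus) (\<lambda>(s, t). g_fun k (s + 1) (nus ! t))) \<noteq> 0"
proof -
  define P where "P = fst alM"
  define Q where "Q = fst alm"
  have Pp: "is_partition P" using max_mem unfolding E_def E_class_def is_bipartition_def P_def by auto
  have Qp: "is_partition Q" using min_mem unfolding E_def E_class_def is_bipartition_def Q_def by auto
  define S where "S = P - Q"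
  have finS: "finite S" using Pp unfolding S_def is_partition_def by auto
  define N where "N = Suc (\<Sum>x\<in>S. snd x)"
  have sndN: "snd x < N" if "x \<in> S" for x
  proof -
    have "snd x \<le> (\<Sum>x\<in>S. snd x)" by (rule member_le_sum[OF that _ finS], simp)
    then show ?thesis unfolding N_def by simp
  qed
  have fst1: "fst x \<ge> 1" if "x \<in> S" for x using part_ge1[OF Pp, of x] that unfolding S_def by auto
  define r where "r = length nus"
  define G where "G = (\<lambda>t. nus ! t)"
  define c where "c = (\<lambda>x::box. real (snd x - 1) + real N * real (fst x - 1))"
  have Gcomp: "G t \<in> components S" if "t < r" for t
    using that nus_set unfolding G_def r_def S_def P_def Q_def by (metis nth_mem)
  have compS: "A \<subseteq> S" "A \<noteq> {}" if "A \<in> components S" for A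
  proof -
    have "A \<in> (\<lambda>x. {y \<in> S. (x, y) \<in> (Rel S)\<^sup>*}) ` S" using that unfolding components_alt .
    then obtain x where x: "x \<in> S" "A = {y \<in> S. (x, y) \<in> (Rel S)\<^sup>*}" by blast
    show "A \<subseteq> S" using x by auto
    have "x \<in> A" using x by simp
    then show "A \<noteq> {}" by blast
  qed
  have good: "good r G (\<lambda>_. 1) c"
    unfolding good_def
  proof (intro conjI allI impI)
    fix t assume t: "t < r"
    show "finite (G t)" using compS(1)[OF Gcomp[OF t]] finS by (rule finite_subset)
    show "G t \<noteq> {}" using compS(2)[OF Gcomp[OF t]] .
    show "\<forall>x\<in>G t. (0::real) < 1" by simp
  next
    fix t t' assume t: "t < r" and t': "t' < r" and tt: "t \<noteq> t'"
    have ne: "G t \<noteq> G t'" using nus_dist t t' tt unfolding G_def r_def by (simp add: nth_eq_iff_index_eq)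
    have sep: "(\<forall>a\<in>G t. \<forall>b\<in>G t'. fst a < fst b) \<or> (\<forall>a\<in>G t. \<forall>b\<in>G t'. fst b < fst a)"
      using comp_sep[OF Pp Qp, of "G t" "G t'"] Gcomp[OF t] Gcomp[OF t'] ne unfolding S_def by blast
    have lt: "c a < c b" if "a \<in> S" "fst a < fst b" for a b
      unfolding c_def by (rule cont_lt[OF fst1[OF that(1)] sndN[OF that(1)] that(2)])
    have sub: "G t \<subseteq> S" "G t' \<subseteq> S" using compS(1) Gcomp t t' by auto
    show "below G c t t' \<or> below G c t' t"
      using sep sub lt unfolding below_def by blast
  qed
  have "det (mm r G (\<lambda>_. 1) c) * det (mm r G (\<lambda>_. 1) c) > 0"
    by (rule core[OF good good], simp)
  then have dR: "det (mm r G (\<lambda>_. 1) c) \<noteq> 0" by auto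
  have dC: "det (mat r r (\<lambda>(s,t). \<Sum>x\<in>G t. (of_nat (snd x - 1) + of_nat N * of_nat (fst x - 1)) ^ s)) \<noteq> (0::complex)"
  proof -
    have eq1: "map_mat (of_real :: real \<Rightarrow> complex) (mm r G (\<lambda>_. 1) c) = mat r r (\<lambda>(s,t). \<Sum>x\<in>G t. (of_nat (snd x - 1) + of_nat N * of_nat (fst x - 1)) ^ s)"
      by (intro eq_matI, auto simp: mm_def c_def)
    have eq2: "det (map_mat (of_real :: real \<Rightarrow> complex) (mm r G (\<lambda>_. 1) c)) = of_real (det (mm r G (\<lambda>_. 1) c))"
      by (rule of_real_hom.hom_det)
    show ?thesis unfolding eq1[symmetric] eq2 using dR by simp
  qed
  have dk: "det (mat r r (\<lambda>(s,t). \<Sum>x\<in>G t. (of_nat (snd x - 1) + k * of_nat (fst x - 1)) ^ s)) \<noteq> (0::complex)"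
    by (rule transc_det[OF k_trans dC])
  have "mat (length nus) (length nus) (\<lambda>(s, t). g_fun k (s + 1) (nus ! t)) =
        mat r r (\<lambda>(s,t). \<Sum>x\<in>G t. (of_nat (snd x - 1) + k * of_nat (fst x - 1)) ^ s)"
    by (intro eq_matI, auto simp: r_def G_def g_fun_def cont_def)
  then show ?thesis using dk by simp
qed

end
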